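(* Let $P=\{(x,y)\in\mathbb{R}^{p+q}: Ax+Gy\le b\}$ be a rational polyhedron and let $\alpha x+\beta y\le\gamma$ (with $\alpha\in\mathbb{Q}^p$, $\beta\in\mathbb{Q}^q$ row vectors, $\gamma\in\mathbb{Q}$) be a cutting plane for $P$, i.e. an inequality that is valid for $P_I$ but not valid for $P$. Then there is a natural number $k\ge 2$ such that $\alpha x+\beta y\le\gamma$ is a $k$-disjunctive cut for $P$.
   Context: Notation: $A\in\mathbb{Q}^{m\times p}$, $G\in\mathbb{Q}^{m\times q}$, $b\in\mathbb{Q}^m$; $P_I=\mathrm{conv}\{(x,y)\in P: x\in\mathbb{Z}^p\}$ is the mixed integer hull. A $k$-disjunction ($k\ge 2$) is a family of $k$ inequalities $d^1x\le\delta^1,\dots,d^kx\le\delta^k$ with $d^i\in\mathbb{Z}^p$ (row vectors, not necessarily distinct) and $\delta^i\in\mathbb{Z}$ such that every $x\in\mathbb{Z}^p$ satisfies $d^ix\le\delta^i$ for at least one $i$. For a closed convex set $C\subseteq\mathbb{R}^{p+q}$, an inequality $\alpha x+\beta y\le\gamma$ is a $k$-disjunctive cut for $C$ if it is not valid for $C$ and there is a $k$-disjunction such that every $(x,y)\in C$ with $\alpha x+\beta y>\gamma$ satisfies $d^ix>\delta^i$ for all $i=1,\dots,k$. *)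

theory Defs
  imports "HOL-Analysis.Analysis"
begin

text \<open>Mixed integer setting: x ranges over real^'p (integer-constrained part),
  y over real^'q (continuous part); constraints indexed by 'm.
  A row vector alpha applied to x is the inner product alpha \<bullet> x.\<close>

definition polyhedron ::
  "real^'p^'m \<Rightarrow> real^'q^'m \<Rightarrow> real^'m \<Rightarrow> ((real^'p) \<times> (real^'q)) set" where
  "polyhedron A G b = {(x, y). \<forall>i. (A *v x) $ i + (G *v y) $ i \<le> b $ i}"

definition int_vec :: "real^'n \<Rightarrow> bool" where
  "int_vec x \<longleftrightarrow> (\<forall>j. x $ j \<in> \<int>)"

definition rat_vec :: "real^'n \<Rightarrow> bool" where
  "rat_vec x \<longleftrightarrow> (\<forall>j. x $ j \<in> \<rat>)"

definition rat_mat :: "real^'n^'m \<Rightarrow> bool" where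
  "rat_mat A \<longleftrightarrow> (\<forall>i j. A $ i $ j \<in> \<rat>)"

definition mixed_integer_hull ::
  "((real^'p) \<times> (real^'q)) set \<Rightarrow> ((real^'p) \<times> (real^'q)) set" where
  "mixed_integer_hull P = convex hull {(x, y) \<in> P. int_vec x}"

definition valid_ineq ::
  "((real^'p) \<times> (real^'q)) set \<Rightarrow> real^'p \<Rightarrow> real^'q \<Rightarrow> real \<Rightarrow> bool" where
  "valid_ineq C \<alpha> \<beta> \<gamma> \<longleftrightarrow> (\<forall>(x, y) \<in> C. \<alpha> \<bullet> x + \<beta> \<bullet> y \<le> \<gamma>)"

definition k_disjunction :: "nat \<Rightarrow> (nat \<Rightarrow> real^'p) \<Rightarrow> (nat \<Rightarrow> real) \<Rightarrow> bool" where
  "k_disjunction k d \<delta> \<longleftrightarrow>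
     2 \<le> k \<and> (\<forall>i<k. int_vec (d i) \<and> \<delta> i \<in> \<int>) \<and>
     (\<forall>x::real^'p. int_vec x \<longrightarrow> (\<exists>i<k. d i \<bullet> x \<le> \<delta> i))"

definition k_disjunctive_cut ::
  "nat \<Rightarrow> ((real^'p) \<times> (real^'q)) set \<Rightarrow> real^'p \<Rightarrow> real^'q \<Rightarrow> real \<Rightarrow> bool" where
  "k_disjunctive_cut k C \<alpha> \<beta> \<gamma> \<longleftrightarrow>
     \<not> valid_ineq C \<alpha> \<beta> \<gamma> \<and>
     (\<exists>d \<delta>. k_disjunction k d \<delta> \<and>
        (\<forall>(x, y) \<in> C. \<alpha> \<bullet> x + \<beta> \<bullet> y > \<gamma> \<longrightarrow> (\<forall>i<k. d i \<bullet> x > \<delta> i)))"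

end

theory Submission
  imports Defs
begin

type_synonym ('p,'q) row = "(real^('p::finite)) \<times> (real^('q::finite)) \<times> real \<times> bool"

fun holds :: "('p::finite,'q::finite) row \<Rightarrow> real^'p \<Rightarrow> real^'q \<Rightarrow> bool" where
  "holds (a,g,c,s) x y = (if s then a \<bullet> x + g \<bullet> y < c else a \<bullet> x + g \<bullet> y \<le> c)"

fun ratrow :: "('p::finite,'q::finite) row \<Rightarrow> bool" where
  "ratrow (a,g,c,s) = (rat_vec a \<and> rat_vec g \<and> c \<in> \<rat>)"

fun comb :: "'q::finite \<Rightarrow> ('p::finite,'q) row \<Rightarrow> ('p,'q) row
   \<Rightarrow> ('p,'q) row" where
  "comb j (ap,gp,cp,sp) (an,gn,cn,sn) =
     ((- gn$j) *\<^sub>R ap + gp$j *\<^sub>R an, (- gn$j) *\<^sub>R gp + gp$j *\<^sub>R gn, (- gn$j)*cp + gp$j*cn, sp \<or> sn)"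

lemma interval_choice:
  fixes lo :: "'a \<Rightarrow> real" and up :: "'b \<Rightarrow> real"
  assumes "finite I" "finite K"
    and h: "\<forall>i\<in>I. \<forall>k\<in>K. lo i \<le> up k \<and> (sl i \<or> su k \<longrightarrow> lo i < up k)"
  shows "\<exists>t. (\<forall>i\<in>I. if sl i then lo i < t else lo i \<le> t) \<and> (\<forall>k\<in>K. if su k then t < up k else t \<le> up k)"
proof (cases "I = {}")
  case True
  show ?thesis
  proof (cases "K = {}")
    case True with \<open>I = {}\<close> show ?thesis by simp
  next
    case False
    have mn: "\<forall>k\<in>K. Min (up ` K) \<le> up k"
      using assms(2) by simp
    show ?thesis
    proof (intro exI[of _ "Min (up ` K) - 1"] conjI ballI)
      fix i assume "i \<in> I" then show "if sl i then lo i < Min (up ` K) - 1 else lo i \<le> Min (up ` K) - 1" using True by simp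
    next
      fix k assume "k \<in> K" then have "Min (up ` K) \<le> up k" using mn by blast
      then show "if su k then Min (up ` K) - 1 < up k else Min (up ` K) - 1 \<le> up k" by simp
    qed
  qed
next
  case I: False
  show ?thesis
  proof (cases "K = {}")
    case True
    have mx: "\<forall>i\<in>I. lo i \<le> Max (lo ` I)"
      using assms(1) by simp
    show ?thesis
    proof (intro exI[of _ "Max (lo ` I) + 1"] conjI ballI)
      fix k assume "k \<in> K" then show "if su k then Max (lo ` I) + 1 < up k else Max (lo ` I) + 1 \<le> up k" using True by simp
    next
      fix i assume "i \<in> I" then have "lo i \<le> Max (lo ` I)" using mx by blast
      then show "if sl i then lo i < Max (lo ` I) + 1 else lo i \<le> Max (lo ` I) + 1" by simp
    qed
  next
    case K: False
    define m where "m = Max (lo ` I)"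
    define M where "M = Min (up ` K)"
    have "m \<in> lo ` I" unfolding m_def using I assms(1) by (intro Max_in) auto
    then obtain i0 where i0: "i0 \<in> I" "lo i0 = m" by auto
    have "M \<in> up ` K" unfolding M_def using K assms(2) by (intro Min_in) auto
    then obtain k0 where k0: "k0 \<in> K" "up k0 = M" by auto
    have lom: "\<forall>i\<in>I. lo i \<le> m" unfolding m_def using assms(1) by simp
    have upM: "\<forall>k\<in>K. M \<le> up k" unfolding M_def using assms(2) by simp
    have "m \<le> M" using h i0 k0 by auto
    show ?thesis
    proof (cases "m < M")
      case True
      show ?thesis
      proof (intro exI[of _ "(m+M)/2"] conjI ballI)
        fix i assume "i \<in> I"
        then have "lo i \<le> m" using lom by blast
        then show "if sl i then lo i < (m+M)/2 else lo i \<le> (m+M)/2" using True by simp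
      next
        fix k assume "k \<in> K"
        then have "M \<le> up k" using upM by blast
        then show "if su k then (m+M)/2 < up k else (m+M)/2 \<le> up k" using True by simp
      qed
    next
      case False
      then have mM: "m = M" using \<open>m \<le> M\<close> by simp
      show ?thesis
      proof (intro exI[of _ m] conjI ballI)
        fix i assume "i \<in> I"
        then have "lo i \<le> up k0 \<and> (sl i \<longrightarrow> lo i < up k0)" using h k0 by blast
        then show "if sl i then lo i < m else lo i \<le> m"
          using k0 mM by auto
      next
        fix k assume "k \<in> K"
        then have "lo i0 \<le> up k \<and> (su k \<longrightarrow> lo i0 < up k)" using h i0 by blast
        then show "if su k then m < up k else m \<le> up k"
          using i0 by auto
      qed
    qed
  qed
qed


lemma key_pos:
  fixes g t y0 c v :: real
  assumes "g > 0"
  shows "(t \<le> y0 + (c - v)/g \<longleftrightarrow> v + (t - y0)*g \<le> c)"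
    and "(t < y0 + (c - v)/g \<longleftrightarrow> v + (t - y0)*g < c)"
  using assms by (simp_all add: field_simps)

lemma key_neg:
  fixes g t y0 c v :: real
  assumes "g < 0"
  shows "(y0 + (c - v)/g \<le> t \<longleftrightarrow> v + (t - y0)*g \<le> c)"
    and "(y0 + (c - v)/g < t \<longleftrightarrow> v + (t - y0)*g < c)"
  using assms by (simp_all add: field_simps)

lemma key_pair:
  fixes gp gn vp vn cp cn y0 :: real
  assumes "gp > 0" "gn < 0"
  shows "(-gn)* vp + gp* vn \<le> (-gn)*cp + gp*cn \<Longrightarrow> y0 + (cn - vn)/gn \<le> y0 + (cp - vp)/gp"
    and "(-gn)* vp + gp* vn < (-gn)*cp + gp*cn \<Longrightarrow> y0 + (cn - vn)/gn < y0 + (cp - vp)/gp"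
  using assms by (simp_all add: field_simps)

lemma rat_vec_comb:
  assumes "rat_vec a" "rat_vec b" "c \<in> \<rat>" "d \<in> \<rat>"
  shows "rat_vec (c *\<^sub>R a + d *\<^sub>R b)"
  using assms unfolding rat_vec_def by (auto intro: Rats_add Rats_mult)

lemma ratrow_comb:
  assumes "ratrow p" "ratrow n"
  shows "ratrow (comb j p n)"
proof -
  obtain ap gp cp sp where p: "p = (ap,gp,cp,sp)" by (cases p) auto
  obtain an gn cn sn where n: "n = (an,gn,cn,sn)" by (cases n) auto
  have q: "gp $ j \<in> \<rat>" "gn $ j \<in> \<rat>" using assms p n by (auto simp: rat_vec_def)
  then have q2: "- gn $ j \<in> \<rat>" by (simp add: Rats_minus_iff)
  have r: "rat_vec ap" "rat_vec gp" "cp \<in> \<rat>" "rat_vec an" "rat_vec gn" "cn \<in> \<rat>"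
    using assms p n by auto
  show ?thesis unfolding p n comb.simps ratrow.simps
    using r q q2 by (intro conjI rat_vec_comb Rats_add Rats_mult) auto
qed

lemma holds_alt:
  "holds r x y \<longleftrightarrow> (if snd (snd (snd r)) then fst r \<bullet> x + fst (snd r) \<bullet> y < fst (snd (snd r))
      else fst r \<bullet> x + fst (snd r) \<bullet> y \<le> fst (snd (snd r)))"
  by (cases r) auto

lemma val_comb:
  "fst (comb j p n) \<bullet> x + fst (snd (comb j p n)) \<bullet> y =
     (- fst (snd n) $ j) * (fst p \<bullet> x + fst (snd p) \<bullet> y) + fst (snd p) $ j * (fst n \<bullet> x + fst (snd n) \<bullet> y)"
  by (cases p; cases n) (simp add: inner_add_left algebra_simps)

lemma comb_parts:
  "fst (snd (snd (comb j p n))) = (- fst (snd n) $ j) * fst (snd (snd p)) + fst (snd p) $ j * fst (snd (snd n))"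
  "snd (snd (snd (comb j p n))) = (snd (snd (snd p)) \<or> snd (snd (snd n)))"
  "fst (snd (comb j p n)) = (- fst (snd n) $ j) *\<^sub>R fst (snd p) + fst (snd p) $ j *\<^sub>R fst (snd n)"
  by (cases p; cases n; simp)+

lemma upd_inner:
  fixes g y :: "real^'q::finite"
  shows "g \<bullet> (y + (t - y $ j) *\<^sub>R axis j 1) = g \<bullet> y + (t - y $ j) * g $ j"
  by (simp add: inner_add_right inner_axis)

lemma lin_comb:
  fixes u v c1 c2 l m :: real
  assumes "l > 0" "m > 0"
    and "if s1 then u < c1 else u \<le> c1" and "if s2 then v < c2 else v \<le> c2"
  shows "if s1 \<or> s2 then l * u + m * v < l * c1 + m * c2 else l * u + m * v \<le> l * c1 + m * c2"
proof -
  have a: "l * u \<le> l * c1" "m * v \<le> m * c2"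
    using assms by (auto split: if_splits intro: mult_left_mono)
  have b: "s1 \<Longrightarrow> l * u < l * c1" "s2 \<Longrightarrow> m * v < m * c2"
    using assms by (auto split: if_splits)
  show ?thesis using a b by (auto simp del: mult_le_cancel_left_pos mult_less_cancel_left_pos)
qed

lemma fm_step:
  fixes S :: "('p::finite,'q::finite) row set" and x :: "real^'p" and j :: 'q
  assumes "finite S"
  defines "S1 \<equiv> {r\<in>S. fst (snd r) $ j = 0} \<union> (\<lambda>(p,n). comb j p n) ` {(p,n). p\<in>S \<and> n\<in>S \<and> fst (snd p) $ j > 0 \<and> fst (snd n) $ j < 0}"
  shows "(\<exists>y. \<forall>r\<in>S. holds r x y) \<longleftrightarrow> (\<exists>y. \<forall>r\<in>S1. holds r x y)"
proof
  assume "\<exists>y. \<forall>r\<in>S. holds r x y" then obtain y where y: "\<forall>r\<in>S. holds r x y" by blast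
  have "\<forall>r\<in>S1. holds r x y"
  proof
    fix r assume "r \<in> S1"
    then consider "r\<in>S" | p n where "r = comb j p n" "p\<in>S" "n\<in>S" "fst (snd p) $ j > 0" "fst (snd n) $ j < 0"
      unfolding S1_def by auto
    then show "holds r x y"
    proof cases
      case 1 thus ?thesis using y by blast
    next
      case 2
      have hp: "holds p x y" and hn: "holds n x y" using y 2 by auto
      have "if snd (snd (snd p)) \<or> snd (snd (snd n))
        then (- fst (snd n) $ j) * (fst p \<bullet> x + fst (snd p) \<bullet> y) + fst (snd p) $ j * (fst n \<bullet> x + fst (snd n) \<bullet> y)
           < (- fst (snd n) $ j) * fst (snd (snd p)) + fst (snd p) $ j * fst (snd (snd n))
        else (- fst (snd n) $ j) * (fst p \<bullet> x + fst (snd p) \<bullet> y) + fst (snd p) $ j * (fst n \<bullet> x + fst (snd n) \<bullet> y)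
           \<le> (- fst (snd n) $ j) * fst (snd (snd p)) + fst (snd p) $ j * fst (snd (snd n))"
        apply (rule lin_comb)
        using 2 hp hn by (auto simp only: holds_alt) 
      then show ?thesis unfolding 2(1) holds_alt[of "comb j p n"] val_comb comb_parts(1,2) .
    qed
  qed
  then show "\<exists>y. \<forall>r\<in>S1. holds r x y" by blast
next
  assume "\<exists>y. \<forall>r\<in>S1. holds r x y" then obtain y where y: "\<forall>r\<in>S1. holds r x y" by blast
  define v where "v r = fst r \<bullet> x + fst (snd r) \<bullet> y" for r :: "('p,'q) row"
  define g where "g r = fst (snd r) $ j" for r :: "('p,'q) row"
  define c where "c r = fst (snd (snd r))" for r :: "('p,'q) row"
  define st where "st r = snd (snd (snd r))" for r :: "('p,'q) row"
  define bd where "bd r = y $ j + (c r - v r) / g r" for r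
  have pair: "bd n \<le> bd p \<and> (st n \<or> st p \<longrightarrow> bd n < bd p)"
    if n: "n \<in> {n\<in>S. g n < 0}" and p: "p \<in> {p\<in>S. g p > 0}" for n p
  proof -
    have "comb j p n \<in> S1" unfolding S1_def using n p g_def by auto
    then have "holds (comb j p n) x y" using y by blast
    then have h: "if st p \<or> st n then (- g n) * v p + g p * v n < (- g n) * c p + g p * c n
       else (- g n) * v p + g p * v n \<le> (- g n) * c p + g p * c n"
      unfolding holds_alt[of "comb j p n"] val_comb comb_parts(1,2) v_def g_def c_def st_def .
    have gp: "g p > 0" and gn: "g n < 0" using n p by auto
    show ?thesis
    proof (cases "st p \<or> st n")
      case True
      then have "(- g n) * v p + g p * v n < (- g n) * c p + g p * c n" using h by simp
      from key_pair(2)[OF gp gn this, of "y $ j"] True show ?thesis unfolding bd_def by auto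
    next
      case False
      then have "(- g n) * v p + g p * v n \<le> (- g n) * c p + g p * c n" using h by simp
      from key_pair(1)[OF gp gn this, of "y $ j"] False show ?thesis unfolding bd_def by auto
    qed
  qed
  obtain t where t1: "\<forall>n\<in>{n\<in>S. g n < 0}. if st n then bd n < t else bd n \<le> t"
    and t2: "\<forall>p\<in>{p\<in>S. g p > 0}. if st p then t < bd p else t \<le> bd p"
    using interval_choice[of "{n\<in>S. g n < 0}" "{p\<in>S. g p > 0}" bd bd st st] pair assms(1) by auto
  define y' where "y' = y + (t - y $ j) *\<^sub>R axis j 1"
  have "\<forall>r\<in>S. holds r x y'"
  proof
    fix r assume r: "r \<in> S"
    have val: "fst r \<bullet> x + fst (snd r) \<bullet> y' = v r + (t - y $ j) * g r"
      unfolding y'_def upd_inner v_def g_def by simp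
    have hr: "holds r x y' \<longleftrightarrow> (if st r then v r + (t - y $ j) * g r < c r else v r + (t - y $ j) * g r \<le> c r)"
      unfolding holds_alt[of r] val st_def c_def ..
    consider "g r = 0" | "g r > 0" | "g r < 0" by linarith
    then show "holds r x y'"
    proof cases
      case 1
      then have "r \<in> S1" unfolding S1_def using r g_def by auto
      then have "holds r x y" using y by blast
      then show ?thesis unfolding hr using 1 unfolding holds_alt[of r] v_def st_def c_def by simp
    next
      case 2
      then have "r \<in> {p\<in>S. g p > 0}" using r by simp
      then have "if st r then t < bd r else t \<le> bd r" using t2 by (rule bspec[rotated])
      then show ?thesis unfolding hr bd_def using key_pos[OF 2, of t "y $ j" "c r" "v r"] by (auto split: if_splits)
    next
      case 3
      then have "r \<in> {n\<in>S. g n < 0}" using r by simp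
      then have "if st r then bd r < t else bd r \<le> t" using t1 by (rule bspec[rotated])
      then show ?thesis unfolding hr bd_def using key_neg[OF 3, of "y $ j" "c r" "v r" t] by (auto split: if_splits)
    qed
  qed
  then show "\<exists>y. \<forall>r\<in>S. holds r x y" by blast
qed

lemma fm:
  fixes J :: "'q::finite set"
  assumes "finite J"
  shows "finite S \<Longrightarrow> (\<forall>r\<in>S. ratrow (r::('p::finite,'q) row)) \<Longrightarrow> (\<forall>r\<in>S. \<forall>i. i \<notin> J \<longrightarrow> fst (snd r) $ i = 0) \<Longrightarrow>
    \<exists>S' :: ('p,'q) row set. finite S' \<and> (\<forall>r\<in>S'. ratrow r) \<and> (\<forall>r\<in>S'. fst (snd r) = 0) \<and>
      (\<forall>x. (\<exists>y. \<forall>r\<in>S. holds r x y) \<longleftrightarrow> (\<exists>y. \<forall>r\<in>S'. holds r x y))"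
  using assms
proof (induction J arbitrary: S rule: finite_induct)
  case empty
  have "\<forall>r\<in>S. fst (snd r) = 0" using empty.prems(3) by (auto simp: vec_eq_iff)
  then show ?case using empty.prems(1,2) by blast
next
  case (insert j J)
  define S1 where "S1 = {r\<in>S. fst (snd r) $ j = 0} \<union> (\<lambda>(p,n). comb j p n) ` {(p,n). p\<in>S \<and> n\<in>S \<and> fst (snd p) $ j > 0 \<and> fst (snd n) $ j < 0}"
  have fin: "finite S1" unfolding S1_def
  proof (intro finite_UnI finite_imageI)
    show "finite {r \<in> S. fst (snd r) $ j = 0}" using insert.prems(1) by simp
    have "{(p,n). p\<in>S \<and> n\<in>S \<and> fst (snd p) $ j > 0 \<and> fst (snd n) $ j < 0} \<subseteq> S \<times> S" by auto
    then show "finite {(p,n). p\<in>S \<and> n\<in>S \<and> fst (snd p) $ j > 0 \<and> fst (snd n) $ j < 0}"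
      using insert.prems(1) by (meson finite_SigmaI finite_subset)
  qed
  have rat: "\<forall>r\<in>S1. ratrow r"
  proof
    fix r assume "r \<in> S1"
    then consider "r \<in> S" | p n where "r = comb j p n" "p\<in>S" "n\<in>S" unfolding S1_def by auto
    then show "ratrow r"
    proof cases
      case 1 then show ?thesis using insert.prems(2) by blast
    next
      case 2 then show ?thesis using insert.prems(2) ratrow_comb by blast
    qed
  qed
  have supp: "\<forall>r\<in>S1. \<forall>i. i \<notin> J \<longrightarrow> fst (snd r) $ i = 0"
  proof (intro ballI allI impI)
    fix r i assume r: "r \<in> S1" and i: "i \<notin> J"
    from r consider "r\<in>S" "fst (snd r) $ j = 0" | p n where "r = comb j p n" "p\<in>S" "n\<in>S"
      unfolding S1_def by auto
    then show "fst (snd r) $ i = 0"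
    proof cases
      case 1 then show ?thesis using insert.prems(3) i by (cases "i = j") auto
    next
      case 2
      show ?thesis
      proof (cases "i = j")
        case True then show ?thesis unfolding 2(1) comb_parts(3) by (simp add: algebra_simps)
      next
        case False
        then have "fst (snd p) $ i = 0" "fst (snd n) $ i = 0" using insert.prems(3) 2 i by auto
        then show ?thesis unfolding 2(1) comb_parts(3) by simp
      qed
    qed
  qed
  obtain S' :: "('p,'q) row set" where S'all: "finite S' \<and> (\<forall>r\<in>S'. ratrow r) \<and> (\<forall>r\<in>S'. fst (snd r) = 0) \<and>
    (\<forall>x. (\<exists>y. \<forall>r\<in>S1. holds r x y) \<longleftrightarrow> (\<exists>y. \<forall>r\<in>S'. holds r x y))"
    using insert.IH[OF fin rat supp] by iprover
  have eq: "\<forall>x. (\<exists>y. \<forall>r\<in>S. holds r x y) \<longleftrightarrow> (\<exists>y. \<forall>r\<in>S'. holds r x y)"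
  proof
    fix x
    have "(\<exists>y. \<forall>r\<in>S. holds r x y) \<longleftrightarrow> (\<exists>y. \<forall>r\<in>S1. holds r x y)"
      unfolding S1_def by (rule fm_step[OF insert.prems(1)])
    also have "\<dots> \<longleftrightarrow> (\<exists>y. \<forall>r\<in>S'. holds r x y)" using S'all by (rule conjE) (elim conjE, erule allE)
    finally show "(\<exists>y. \<forall>r\<in>S. holds r x y) \<longleftrightarrow> (\<exists>y. \<forall>r\<in>S'. holds r x y)" .
  qed
  show ?case
    apply (rule exI[of _ S'])
    using S'all eq by (elim conjE) (intro conjI)
qed

lemma common_denom:
  assumes "finite F"
  shows "F \<subseteq> \<rat> \<Longrightarrow> \<exists>N::nat. N > 0 \<and> (\<forall>q\<in>F. real N * q \<in> \<int>)"
  using assms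
proof (induction F rule: finite_induct)
  case empty
  show ?case by (intro exI[of _ 1]) simp
next
  case (insert q F)
  obtain N :: nat where N: "N > 0" "\<forall>q\<in>F. real N * q \<in> \<int>" using insert by auto
  have "q \<in> \<rat>" using insert.prems by auto
  then obtain r where r: "q = of_rat r" by (auto elim: Rats_cases)
  obtain n d where nd: "quotient_of r = (n, d)" by fastforce
  have d: "d > 0" using quotient_of_denom_pos[OF nd] .
  have "r = of_int n / of_int d" using quotient_of_div[OF nd] .
  then have qd: "real_of_int d * q = real_of_int n" using d r by (simp add: of_rat_divide)
  define N' where "N' = N * nat d"
  have "N' > 0" using N d unfolding N'_def by simp
  moreover have "real N' * q \<in> \<int>"
  proof -
    have "real N' * q = real N * (real_of_int d * q)" unfolding N'_def using d by simp
    also have "\<dots> = real N * real_of_int n" using qd by simp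
    finally show ?thesis by simp
  qed
  moreover have "\<forall>q'\<in>F. real N' * q' \<in> \<int>"
  proof
    fix q' assume "q' \<in> F"
    then have "real N * q' \<in> \<int>" using N by blast
    moreover have "real N' * q' = real (nat d) * (real N * q')" unfolding N'_def by simp
    moreover have "real (nat d) \<in> \<int>" by simp
    ultimately show "real N' * q' \<in> \<int>" by (metis Ints_mult)
  qed
  ultimately show ?case by blast
qed

lemma int_inner:
  fixes a x :: "real^'n::finite"
  assumes "int_vec a" "int_vec x"
  shows "a \<bullet> x \<in> \<int>"
  using assms unfolding int_vec_def inner_vec_def by (auto intro!: Ints_sum Ints_mult)

lemma Ints_gt_imp_ge:
  fixes u v :: real
  assumes "u \<in> \<int>" "v \<in> \<int>" "u > v"
  shows "u \<ge> v + 1"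
proof -
  obtain m where m: "u = of_int m" using assms(1) by (auto elim: Ints_cases)
  obtain n where n: "v = of_int n" using assms(2) by (auto elim: Ints_cases)
  have "m > n" using assms(3) m n by simp
  then have "m \<ge> n + 1" by simp
  then show ?thesis using m n by (simp add: of_int_add[symmetric] del: of_int_add)
qed

lemma holds_zero:
  assumes "fst (snd r) = 0"
  shows "holds r x y = holds r x 0"
  using assms by (cases r) simp

lemma row_disj:
  fixes r :: "('p::finite,'q::finite) row"
  assumes "ratrow r" "fst (snd r) = 0"
  shows "\<exists>D \<Delta>. int_vec D \<and> \<Delta> \<in> \<int> \<and> (\<forall>x. holds r x 0 \<longrightarrow> D \<bullet> x > \<Delta>) \<and>
     (\<forall>x. int_vec x \<and> \<not> holds r x 0 \<longrightarrow> D \<bullet> x \<le> \<Delta>)"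
proof -
  obtain a g c s where r: "r = (a,g,c,s)" by (cases r) auto
  have g: "g = 0" using assms r by simp
  have ra: "rat_vec a" "c \<in> \<rat>" using assms r by auto
  define F where "F = range (\<lambda>j. a $ j) \<union> {c}"
  have "finite F" unfolding F_def by simp
  moreover have "F \<subseteq> \<rat>" unfolding F_def using ra by (auto simp: rat_vec_def)
  ultimately obtain N :: nat where N: "N > 0" "\<forall>q\<in>F. real N * q \<in> \<int>" using common_denom by blast
  define a' where "a' = real N *\<^sub>R a"
  define c' where "c' = real N * c"
  have ia: "int_vec a'" unfolding a'_def int_vec_def using N(2) F_def by auto
  have ic: "c' \<in> \<int>" unfolding c'_def using N(2) F_def by auto
  have sc: "a' \<bullet> x = real N * (a \<bullet> x)" for x unfolding a'_def by simp
  have Npos: "real N > 0" using N by simp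
  have lt: "a \<bullet> x < c \<longleftrightarrow> a' \<bullet> x < c'" for x unfolding sc c'_def using Npos by simp
  have le: "a \<bullet> x \<le> c \<longleftrightarrow> a' \<bullet> x \<le> c'" for x unfolding sc c'_def using Npos by simp
  have h: "holds r x 0 \<longleftrightarrow> (if s then a \<bullet> x < c else a \<bullet> x \<le> c)" for x unfolding r by simp
  show ?thesis
  proof (cases s)
    case True
    show ?thesis
      apply (rule exI[of _ "- a'"], rule exI[of _ "- c'"])
      using ia ic h lt True by (auto simp: int_vec_def)
  next
    case False
    have "- a' \<bullet> x \<le> - c' - 1" if "int_vec x" "\<not> holds r x 0" for x
    proof -
      have "a' \<bullet> x > c'" using that h le False by auto
      then have "a' \<bullet> x \<ge> c' + 1" using Ints_gt_imp_ge int_inner[OF ia that(1)] ic by blast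
      then show ?thesis by simp
    qed
    moreover have "- a' \<bullet> x > - c' - 1" if "holds r x 0" for x
      using that h le False by auto
    moreover have "int_vec (- a')" using ia by (auto simp: int_vec_def)
    moreover have "- c' - 1 \<in> \<int>" using ic by simp
    ultimately show ?thesis by blast
  qed
qed

lemma mat_row_inner:
  fixes A :: "real^'p::finite^'m::finite"
  shows "(A *v x) $ i = A $ i \<bullet> x"
  by (simp add: matrix_vector_mult_def inner_vec_def)

theorem lemma2p5:
  fixes A :: "real^'p^'m" and G :: "real^'q^'m" and b :: "real^'m"
    and \<alpha> :: "real^'p" and \<beta> :: "real^'q" and \<gamma> :: real
  assumes "rat_mat A" and "rat_mat G" and "rat_vec b"
    and "rat_vec \<alpha>" and "rat_vec \<beta>" and "\<gamma> \<in> \<rat>"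
    and "valid_ineq (mixed_integer_hull (polyhedron A G b)) \<alpha> \<beta> \<gamma>"
    and "\<not> valid_ineq (polyhedron A G b) \<alpha> \<beta> \<gamma>"
  shows "\<exists>k\<ge>2. k_disjunctive_cut k (polyhedron A G b) \<alpha> \<beta> \<gamma>"
proof -
  define P where "P = polyhedron A G b"
  define S0 :: "('p,'q) row set" where
    "S0 = range (\<lambda>i. (A $ i, G $ i, b $ i, False)) \<union> {(- \<alpha>, - \<beta>, - \<gamma>, True)}"
  have finS0: "finite S0" unfolding S0_def by simp
  have ratS0: "\<forall>r\<in>S0. ratrow r"
    unfolding S0_def using assms(1-6)
    by (auto simp: rat_mat_def rat_vec_def)
  have semS0: "(\<forall>r\<in>S0. holds r x y) \<longleftrightarrow> (x, y) \<in> P \<and> \<alpha> \<bullet> x + \<beta> \<bullet> y > \<gamma>" for x y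
  proof -
    have "(\<forall>r\<in>S0. holds r x y) \<longleftrightarrow> (\<forall>i. A $ i \<bullet> x + G $ i \<bullet> y \<le> b $ i) \<and> - \<alpha> \<bullet> x + - \<beta> \<bullet> y < - \<gamma>"
      unfolding S0_def by auto
    also have "\<dots> \<longleftrightarrow> (x, y) \<in> P \<and> \<alpha> \<bullet> x + \<beta> \<bullet> y > \<gamma>"
      unfolding P_def polyhedron_def mat_row_inner by auto
    finally show ?thesis .
  qed
  obtain S' :: "('p,'q) row set" where S': "finite S'" "\<forall>r\<in>S'. ratrow r" "\<forall>r\<in>S'. fst (snd r) = 0"
    "\<forall>x. (\<exists>y. \<forall>r\<in>S0. holds r x y) \<longleftrightarrow> (\<exists>y. \<forall>r\<in>S'. holds r x y)"
    using fm[of "UNIV :: 'q set" S0, OF _ finS0 ratS0] by auto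
  have Q: "(\<exists>y. (x, y) \<in> P \<and> \<alpha> \<bullet> x + \<beta> \<bullet> y > \<gamma>) \<longleftrightarrow> (\<forall>r\<in>S'. holds r x 0)" for x
  proof -
    have "(\<exists>y. (x, y) \<in> P \<and> \<alpha> \<bullet> x + \<beta> \<bullet> y > \<gamma>) \<longleftrightarrow> (\<exists>y. \<forall>r\<in>S'. holds r x y)"
      using S'(4) semS0 by auto
    also have "\<dots> \<longleftrightarrow> (\<forall>r\<in>S'. holds r x 0)"
      using S'(3) holds_zero by blast
    finally show ?thesis .
  qed
  have noint: "\<not> (\<forall>r\<in>S'. holds r x 0)" if x: "int_vec x" for x
  proof
    assume "\<forall>r\<in>S'. holds r x 0"
    then obtain y where y: "(x, y) \<in> P" "\<alpha> \<bullet> x + \<beta> \<bullet> y > \<gamma>" using Q by blast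
    have "(x, y) \<in> mixed_integer_hull P" unfolding mixed_integer_hull_def
      by (rule hull_inc) (use y x in auto)
    then have "\<alpha> \<bullet> x + \<beta> \<bullet> y \<le> \<gamma>" using assms(7) unfolding P_def valid_ineq_def by blast
    then show False using y by simp
  qed
  define Rp where "Rp r D \<Delta> \<longleftrightarrow> int_vec D \<and> \<Delta> \<in> \<int> \<and> (\<forall>x. holds r x 0 \<longrightarrow> D \<bullet> x > \<Delta>) \<and>
     (\<forall>x. int_vec x \<and> \<not> holds r x 0 \<longrightarrow> D \<bullet> x \<le> \<Delta>)" for r :: "('p,'q) row" and D :: "real^'p" and \<Delta>
  define dd where "dd r = (SOME p. Rp r (fst p) (snd p))" for r
  have dd: "Rp r (fst (dd r)) (snd (dd r))" if rS: "r \<in> S'" for r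
  proof -
    obtain D \<Delta> where "Rp r D \<Delta>" using row_disj[of r] S'(2,3) rS unfolding Rp_def by blast
    then have "Rp r (fst (D, \<Delta>)) (snd (D, \<Delta>))" by simp
    then show ?thesis unfolding dd_def by (rule someI)
  qed
  obtain rs where rs: "set rs = S'" using finite_list[OF S'(1)] by blast
  have "int_vec (0 :: real^'p)" by (simp add: int_vec_def)
  then have "S' \<noteq> {}" using noint by blast
  then have len: "length rs > 0" using rs by auto
  define k where "k = length rs + 1"
  define d where "d i = fst (dd (rs ! (i mod length rs)))" for i
  define \<delta> where "\<delta> i = snd (dd (rs ! (i mod length rs)))" for i
  have inS: "rs ! (i mod length rs) \<in> S'" for i using rs len by auto
  have Ri: "Rp (rs ! (i mod length rs)) (d i) (\<delta> i)" for i
    unfolding d_def \<delta>_def using dd[OF inS] .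
  have disj: "k_disjunction k d \<delta>"
    unfolding k_disjunction_def
  proof (intro conjI allI impI)
    show "2 \<le> k" using len unfolding k_def by linarith
    fix i assume "i < k"
    show "int_vec (d i)" "\<delta> i \<in> \<int>" using Ri[of i] unfolding Rp_def by auto
  next
    fix x :: "real^'p" assume x: "int_vec x"
    then obtain r where r: "r \<in> S'" "\<not> holds r x 0" using noint by blast
    then obtain i where i: "i < length rs" "rs ! i = r" using rs by (auto simp: in_set_conv_nth)
    have im: "i mod length rs = i" using i by simp
    have "d i \<bullet> x \<le> \<delta> i" using Ri[of i] x r i unfolding im Rp_def by auto
    then show "\<exists>i<k. d i \<bullet> x \<le> \<delta> i" using i unfolding k_def by (intro exI[of _ i]) auto
  qed
  have cut: "\<forall>(x, y)\<in>P. \<alpha> \<bullet> x + \<beta> \<bullet> y > \<gamma> \<longrightarrow> (\<forall>i<k. d i \<bullet> x > \<delta> i)"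
  proof (intro ballI impI allI, clarify)
    fix x y i assume xy: "(x, y) \<in> P" "\<alpha> \<bullet> x + \<beta> \<bullet> y > \<gamma>"
    then have "\<forall>r\<in>S'. holds r x 0" using Q by blast
    then have "holds (rs ! (i mod length rs)) x 0" using inS by blast
    then show "d i \<bullet> x > \<delta> i" using Ri[of i] unfolding Rp_def by blast
  qed
  have "k_disjunctive_cut k P \<alpha> \<beta> \<gamma>"
    unfolding k_disjunctive_cut_def using assms(8) disj cut unfolding P_def by blast
  moreover have "k \<ge> 2" using len unfolding k_def by linarith
  ultimately show ?thesis unfolding P_def by blast
qed

end
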